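(* Let $A,B$ be real symmetric $4\times 4$ matrices defining quadrics $\mathcal A: X^TAX=0$, $\mathcal B: X^TBX=0$ in $\mathbb{PR}^3$ with $f(\lambda)=\det(\lambda A-B)$ not identically zero. If $f(\lambda)=0$ has two real double roots with Segre characteristic $[22]$, then the only possible index sequences (up to equivalence) are $\langle 2\,{\wr\wr}_{-}\,2\,{\wr\wr}_{-}\,2\rangle$ and $\langle 2\,{\wr\wr}_{-}\,2\,{\wr\wr}_{+}\,2\rangle$, and for both sequences the QSIC comprises a real line and a space cubic curve intersecting at two distinct real points.
   Context: $X=(x,y,z,w)^T$ homogeneous coordinates; QSIC $=\mathcal A\cap\mathcal B$. One may choose the basis of the pencil with $A$ nonsingular. Canonical form: for $A$ nonsingular there is a real invertible $Q$ with $Q^TAQ=\mathrm{diag}(\varepsilon_1E_1,\dots,\varepsilon_rE_r,E_{r+1},\dots,E_m)$, $Q^TBQ=\mathrm{diag}(\varepsilon_1E_1J_1,\dots,\varepsilon_rE_rJ_r,E_{r+1}J_{r+1},\dots,E_mJ_m)$, $J_1,\dots,J_r$ the real Jordan blocks of $A^{-1}B$ for real eigenvalues, the others for non-real eigenvalues, $E_i$ anti-identity of matching size, $\varepsilon_i\in\{\pm1\}$ uniquely determined (sign of $J_i$). Segre characteristic $[22]$: two distinct eigenvalues, each with a single $2\times2$ Jordan block. $\mathrm{Id}(\lambda)$ = number of positive eigenvalues of $\lambda A-B$. Index sequence $\langle s_0\sigma_1s_1\cdots\sigma_rs_r\rangle$: $s_j$ are the values of $\mathrm{Id}$ on the intervals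 determined by the distinct real roots $\lambda_1<\dots<\lambda_r$; $\sigma_j$ encodes the Jordan blocks of $\lambda_j$: $|$ for $1\times1$, $p$ copies of $\wr$ with subscript the block's sign for $p\times p$, $p\ge 2$. Equivalence of sequences: induced by change of basis of the pencil (rotation, reversal, and complement $s_j\mapsto4-s_j$ from $(A,B)\mapsto(-A,-B)$, which reverses all sign subscripts). *)

theory Defs
  imports "HOL-Analysis.Analysis" "HOL-Computational_Algebra.Polynomial"
begin

definition sym_mat :: "real^'n^'n \<Rightarrow> bool" where
  "sym_mat A \<longleftrightarrow> transpose A = A"

definition charpoly :: "real^'n^'n \<Rightarrow> real poly" where
  "charpoly M = det (\<chi> i j. (if i = j then [:0, 1:] else 0) - [: M $ i $ j :])"

definition pos_eig_count :: "real^'n^'n \<Rightarrow> nat" where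
  "pos_eig_count M = (\<Sum>a \<in> {a. a > 0 \<and> poly (charpoly M) a = 0}. order a (charpoly M))"

definition Id_pencil :: "real^4^4 \<Rightarrow> real^4^4 \<Rightarrow> real \<Rightarrow> nat" where
  "Id_pencil A B l = pos_eig_count (l *\<^sub>R A - B)"

definition jordan22 :: "real \<Rightarrow> real \<Rightarrow> real^4^4" where
  "jordan22 l1 l2 = vector [vector [l1, 1, 0, 0], vector [0, l1, 0, 0],
                             vector [0, 0, l2, 1], vector [0, 0, 0, l2]]"

definition segre22 :: "real^4^4 \<Rightarrow> real^4^4 \<Rightarrow> real \<Rightarrow> real \<Rightarrow> bool" where
  "segre22 A B l1 l2 \<longleftrightarrow> invertible A \<and> l1 \<noteq> l2 \<and>
     (\<exists>P::real^4^4. invertible P \<and> matrix_inv P ** (matrix_inv A ** B) ** P = jordan22 l1 l2)"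

text \<open>Canonical form diag(e1 E, e2 E), diag(e1 E J_2(l1), e2 E J_2(l2)), E the 2x2 anti-identity.\<close>
definition canonA22 :: "real \<Rightarrow> real \<Rightarrow> real^4^4" where
  "canonA22 e1 e2 = vector [vector [0, e1, 0, 0], vector [e1, 0, 0, 0],
                            vector [0, 0, 0, e2], vector [0, 0, e2, 0]]"

definition canonB22 :: "real \<Rightarrow> real \<Rightarrow> real \<Rightarrow> real \<Rightarrow> real^4^4" where
  "canonB22 e1 e2 l1 l2 = vector [vector [0, e1 * l1, 0, 0], vector [e1 * l1, e1, 0, 0],
                                  vector [0, 0, 0, e2 * l2], vector [0, 0, e2 * l2, e2]]"

definition block_signs22 :: "real^4^4 \<Rightarrow> real^4^4 \<Rightarrow> real \<Rightarrow> real \<Rightarrow> real \<Rightarrow> real \<Rightarrow> bool" where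
  "block_signs22 A B l1 l2 e1 e2 \<longleftrightarrow> e1 \<in> {-1, 1} \<and> e2 \<in> {-1, 1} \<and>
     (\<exists>Q::real^4^4. invertible Q \<and> transpose Q ** A ** Q = canonA22 e1 e2
                   \<and> transpose Q ** B ** Q = canonB22 e1 e2 l1 l2)"

section \<open>Index sequences <s0 (wr wr)_e1 s1 (wr wr)_e2 s2> and their equivalence\<close>

type_synonym iseq22 = "nat \<times> real \<times> nat \<times> real \<times> nat"

text \<open>Index sequence for roots l1 < l2; s_j = value of Id on the j-th interval
  (sampled at a point of the interval; Id is constant on each interval).\<close>
definition index_seq22 :: "real^4^4 \<Rightarrow> real^4^4 \<Rightarrow> real \<Rightarrow> real \<Rightarrow> real \<Rightarrow> real \<Rightarrow> iseq22" where
  "index_seq22 A B l1 l2 e1 e2 =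
     (Id_pencil A B (l1 - 1), e1, Id_pencil A B ((l1 + l2) / 2), e2, Id_pencil A B (l2 + 1))"

fun seq_rot :: "iseq22 \<Rightarrow> iseq22" where
  "seq_rot (s0, e1, s1, e2, s2) = (s1, e2, s2, e1, s1)"

fun seq_rev :: "iseq22 \<Rightarrow> iseq22" where
  "seq_rev (s0, e1, s1, e2, s2) = (s2, e2, s1, e1, s0)"

fun seq_compl :: "iseq22 \<Rightarrow> iseq22" where
  "seq_compl (s0, e1, s1, e2, s2) = (4 - s0, - e1, 4 - s1, - e2, 4 - s2)"

definition seq_step :: "iseq22 \<Rightarrow> iseq22 \<Rightarrow> bool" where
  "seq_step x y \<longleftrightarrow> y = seq_rot x \<or> y = seq_rev x \<or> y = seq_compl x"

definition seq_equiv :: "iseq22 \<Rightarrow> iseq22 \<Rightarrow> bool" where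
  "seq_equiv = equivclp seq_step"

section \<open>The QSIC and its components (complex points, as cones in C^4 minus 0)\<close>

definition cmat :: "real^4^4 \<Rightarrow> complex^4^4" where
  "cmat M = (\<chi> i j. complex_of_real (M $ i $ j))"

definition cvec :: "real^4 \<Rightarrow> complex^4" where
  "cvec v = (\<chi> i. complex_of_real (v $ i))"

definition qform :: "real^4^4 \<Rightarrow> complex^4 \<Rightarrow> complex" where
  "qform A X = (\<Sum>i\<in>UNIV. \<Sum>j\<in>UNIV. X $ i * complex_of_real (A $ i $ j) * X $ j)"

definition qsic :: "real^4^4 \<Rightarrow> real^4^4 \<Rightarrow> (complex^4) set" where
  "qsic A B = {X. X \<noteq> 0 \<and> qform A X = 0 \<and> qform B X = 0}"

definition real_line :: "real^4 \<Rightarrow> real^4 \<Rightarrow> (complex^4) set" where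
  "real_line u v = {X. X \<noteq> 0 \<and> (\<exists>a b. X = a *s cvec u + b *s cvec v)}"

definition lin_indep2 :: "real^4 \<Rightarrow> real^4 \<Rightarrow> bool" where
  "lin_indep2 u v \<longleftrightarrow> (\<forall>a b::real. a *\<^sub>R u + b *\<^sub>R v = 0 \<longrightarrow> a = 0 \<and> b = 0)"

text \<open>Space cubic (twisted cubic) curve: projective image of the rational normal curve
  [s:t] -> [s^3 : s^2 t : s t^2 : t^3] under a real projective transformation M.\<close>
definition space_cubic :: "real^4^4 \<Rightarrow> (complex^4) set" where
  "space_cubic M = {cmat M *v vector [s^3, s^2 * t, s * t^2, t^3] | s t. (s, t) \<noteq> (0, 0)}"

definition real_point :: "real^4 \<Rightarrow> (complex^4) set" where
  "real_point p = {c *s cvec p | c. c \<noteq> 0}"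

end

theory Submission
  imports Defs
begin

lemma vector_4 [simp]:
  "(vector [a,b,c,d] :: 'a::zero^4) $ 1 = a"
  "(vector [a,b,c,d] :: 'a::zero^4) $ 2 = b"
  "(vector [a,b,c,d] :: 'a::zero^4) $ 3 = c"
  "(vector [a,b,c,d] :: 'a::zero^4) $ 4 = d"
  unfolding vector_def by simp_all

lemma det_4:
  "det (A::'a::comm_ring_1^4^4) =
 A$1$1*A$2$2*A$3$3*A$4$4 - A$1$1*A$2$2*A$3$4*A$4$3 - A$1$1*A$2$3*A$3$2*A$4$4 + A$1$1*A$2$3*A$3$4*A$4$2
 + A$1$1*A$2$4*A$3$2*A$4$3 - A$1$1*A$2$4*A$3$3*A$4$2 - A$1$2*A$2$1*A$3$3*A$4$4 + A$1$2*A$2$1*A$3$4*A$4$3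
 + A$1$2*A$2$3*A$3$1*A$4$4 - A$1$2*A$2$3*A$3$4*A$4$1 - A$1$2*A$2$4*A$3$1*A$4$3 + A$1$2*A$2$4*A$3$3*A$4$1
 + A$1$3*A$2$1*A$3$2*A$4$4 - A$1$3*A$2$1*A$3$4*A$4$2 - A$1$3*A$2$2*A$3$1*A$4$4 + A$1$3*A$2$2*A$3$4*A$4$1
 + A$1$3*A$2$4*A$3$1*A$4$2 - A$1$3*A$2$4*A$3$2*A$4$1 - A$1$4*A$2$1*A$3$2*A$4$3 + A$1$4*A$2$1*A$3$3*A$4$2
 + A$1$4*A$2$2*A$3$1*A$4$3 - A$1$4*A$2$2*A$3$3*A$4$1 - A$1$4*A$2$3*A$3$1*A$4$2 + A$1$4*A$2$3*A$3$2*A$4$1"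
proof -
  have sc: "sign (Transposition.transpose a b \<circ> p) = (if a = b then sign p else - sign p)" if "permutation p" for a b and p :: "4 \<Rightarrow> 4"
    using that by (simp add: sign_compose permutation_swap_id sign_swap_id)
  have f1: "finite {2::4, 3, 4}" "1 \<notin> {2::4, 3, 4}" by auto
  have f2: "finite {3::4, 4}" "2 \<notin> {3::4, 4}" by auto
  have f3: "finite {4::4}" "3 \<notin> {4::4}" by auto
  show ?thesis
    unfolding det_def UNIV_4
    unfolding sum_over_permutations_insert[OF f1]
    unfolding sum_over_permutations_insert[OF f2]
    unfolding sum_over_permutations_insert[OF f3]
    unfolding permutes_sing
    by (simp add: sc sign_swap_id permutation_swap_id permutation_compose sign_id swap_id_eq algebra_simps)
qed

lemma sym_inner:
  fixes S :: "real^'n^'n" assumes "transpose S = S"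
  shows "(S *v x) \<bullet> y = x \<bullet> (S *v y)"
proof -
  have "S *v x = x v* S" by (metis assms vector_transpose_matrix)
  then show ?thesis by (simp add: dot_lmul_matrix)
qed

lemma quad_zero_lemma:
  fixes a b :: real
  assumes "\<forall>t. a * t + b * t^2 \<le> 0" shows "a = 0"
proof (rule ccontr)
  assume a0: "a \<noteq> 0"
  define c where "c = \<bar>b\<bar> + 1"
  have c0: "c > 0" by (simp add: c_def)
  define t where "t = a / (2 * c)"
  have h: "a*t + b*t^2 \<le> 0" using assms by blast
  have "b*t^2 \<ge> -c*t^2"
    by (rule mult_right_mono) (auto simp: c_def)
  moreover have "a*t - c*t^2 = a^2/(4*c)" using c0 by (simp add: t_def field_simps power2_eq_square)
  moreover have "a^2/(4*c) > 0" using a0 c0 by simp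
  ultimately show False using h by linarith
qed

lemma eigvec_exists:
  fixes S :: "real^'n^'n"
  assumes sym: "transpose S = S" and sub: "subspace V" and inv: "\<And>x. x\<in>V \<Longrightarrow> S *v x \<in> V"
    and ne: "\<exists>x\<in>V. x \<noteq> 0"
  shows "\<exists>v\<in>V. norm v = 1 \<and> (\<exists>\<mu>. S *v v = \<mu> *\<^sub>R v)"
proof -
  let ?K = "V \<inter> sphere 0 1"
  let ?f = "\<lambda>x. x \<bullet> (S *v x)"
  have cK: "compact ?K" by (intro closed_Int_compact closed_subspace sub compact_sphere)
  from ne obtain x where x: "x \<in> V" "x \<noteq> 0" by blast
  have "(1/norm x) *\<^sub>R x \<in> ?K" using x sub by (simp add: subspace_scale)
  hence neK: "?K \<noteq> {}" by blast
  have cf: "continuous_on ?K ?f"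
    by (intro continuous_intros linear_continuous_on matrix_vector_mul_bounded_linear)
  obtain v where v: "v \<in> ?K" and vmax: "\<forall>y\<in>?K. ?f y \<le> ?f v"
    using continuous_attains_sup[OF cK neK cf] by blast
  define M where "M = ?f v"
  have nv: "norm v = 1" "v \<in> V" using v by auto
  have vv: "v \<bullet> v = 1" using nv by (simp add: power2_norm_eq_inner[symmetric])
  have bound: "?f y \<le> M * (y \<bullet> y)" if "y \<in> V" for y
  proof cases
    assume "y = 0" then show ?thesis by simp
  next
    assume y0: "y \<noteq> 0"
    let ?z = "(1/norm y) *\<^sub>R y"
    have "?z \<in> ?K" using that y0 sub by (simp add: subspace_scale)
    hence "?f ?z \<le> M" using vmax M_def by blast
    moreover have "?f ?z = ?f y / (norm y)^2"
      by (simp add: matrix_vector_mult_scaleR power2_eq_square)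
    ultimately have h: "?f y / (norm y)^2 \<le> M" by simp
    have yy: "y \<bullet> y = (norm y)^2" by (simp add: power2_norm_eq_inner)
    have "(norm y)^2 > 0" using y0 by simp
    with h have "?f y \<le> M * (norm y)^2" by (simp add: divide_le_eq)
    thus ?thesis using yy by simp
  qed
  define u where "u = S *v v - M *\<^sub>R v"
  have uV: "u \<in> V" using inv nv sub by (simp add: u_def subspace_diff subspace_scale)
  have uv1: "u \<bullet> v = (S *v v) \<bullet> v - M * (v \<bullet> v)" by (simp add: u_def inner_diff_left)
  have uv2: "(S *v v) \<bullet> v = M" by (simp add: M_def inner_commute)
  have uv: "u \<bullet> v = 0" using uv1 uv2 vv by simp
  have key: "\<forall>t. (2*(u \<bullet> (S *v v))) * t + (?f u - M*(u \<bullet> u)) * t^2 \<le> 0"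
  proof
    fix t
    have "v + t *\<^sub>R u \<in> V" using nv uV sub by (simp add: subspace_add subspace_scale)
    from bound[OF this] have b: "?f (v + t *\<^sub>R u) \<le> M * ((v + t *\<^sub>R u) \<bullet> (v + t *\<^sub>R u))" .
    have s1: "v \<bullet> (S *v u) = u \<bullet> (S *v v)"
      using sym_inner[OF sym, of v u] by (simp add: inner_commute)
    have e1: "?f (v + t *\<^sub>R u) = M + 2 * t * (u \<bullet> (S *v v)) + t^2 * ?f u"
      by (simp add: M_def matrix_vector_right_distrib matrix_vector_mult_scaleR inner_add_left
          inner_add_right s1 power2_eq_square algebra_simps)
    have e2: "(v + t *\<^sub>R u) \<bullet> (v + t *\<^sub>R u) = 1 + t^2 * (u \<bullet> u)"
      using vv uv by (simp add: inner_add_left inner_add_right inner_commute power2_eq_square algebra_simps)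
    show "(2*(u \<bullet> (S *v v))) * t + (?f u - M*(u \<bullet> u)) * t^2 \<le> 0"
      using b unfolding e1 e2 by (simp add: algebra_simps)
  qed
  have "2*(u \<bullet> (S *v v)) = 0" by (rule quad_zero_lemma[OF key])
  hence "u \<bullet> (S *v v) = 0" by simp
  hence "u \<bullet> u = 0" using uv by (simp add: u_def inner_diff_right inner_commute)
  hence "u = 0" by simp
  hence "S *v v = M *\<^sub>R v" by (simp add: u_def)
  thus ?thesis using nv by blast
qed

lemma spectral_basis_aux:
  fixes S :: "real^'n^'n"
  assumes sym: "transpose S = S"
  shows "subspace V \<Longrightarrow> (\<forall>x\<in>V. S *v x \<in> V) \<Longrightarrow>
    \<exists>B. B \<subseteq> V \<and> pairwise orthogonal B \<and> (\<forall>b\<in>B. norm b = 1 \<and> (\<exists>\<mu>. S *v b = \<mu> *\<^sub>R b)) \<and> span B = V"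
proof (induction "dim V" arbitrary: V rule: less_induct)
  case less
  show ?case
  proof (cases "\<exists>x\<in>V. x \<noteq> 0")
    case False
    hence "V = {0}" using less.prems(1) subspace_0 by blast
    thus ?thesis by (intro exI[of _ "{}"]) auto
  next
    case True
    obtain v \<mu> where v: "v \<in> V" "norm v = 1" "S *v v = \<mu> *\<^sub>R v"
      using eigvec_exists[OF sym less.prems(1) _ True] less.prems(2) by blast
    have vv: "v \<bullet> v = 1" using v by (simp add: power2_norm_eq_inner[symmetric])
    define V' where "V' = {x \<in> V. v \<bullet> x = 0}"
    have sub': "subspace V'" using less.prems(1)
      unfolding V'_def subspace_def by (auto simp: inner_add_right)
    have inv': "\<forall>x\<in>V'. S *v x \<in> V'"
    proof
      fix x assume x: "x \<in> V'"
      have "v \<bullet> (S *v x) = (S *v v) \<bullet> x" using sym_inner[OF sym] by simp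
      also have "\<dots> = 0" using x v by (simp add: V'_def)
      finally show "S *v x \<in> V'" using x less.prems(2) by (simp add: V'_def)
    qed
    have "v \<notin> V'" using vv by (simp add: V'_def)
    hence "V' \<noteq> V" using v(1) by blast
    hence "V' \<subset> V" by (auto simp: V'_def)
    moreover have eq1: "span V' = V'" using sub' by (simp add: span_eq_iff)
    moreover have eq2: "span V = V" using less.prems(1) by (simp add: span_eq_iff)
    ultimately have "span V' \<subset> span V" unfolding eq1 eq2 by blast
    hence "dim V' < dim V" by (rule dim_psubset)
    then obtain B' where B': "B' \<subseteq> V'" "pairwise orthogonal B'"
        "\<forall>b\<in>B'. norm b = 1 \<and> (\<exists>\<mu>. S *v b = \<mu> *\<^sub>R b)" "span B' = V'"
      using less.hyps[OF _ sub' inv'] by blast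
    define B where "B = insert v B'"
    have "B \<subseteq> V" using B'(1) v by (auto simp: B_def V'_def)
    moreover have "pairwise orthogonal B"
      using B'(1,2) unfolding B_def pairwise_insert
      by (auto simp: V'_def orthogonal_def inner_commute)
    moreover have "\<forall>b\<in>B. norm b = 1 \<and> (\<exists>\<mu>. S *v b = \<mu> *\<^sub>R b)" using B'(3) v by (auto simp: B_def)
    moreover have "span B = V"
    proof
      show "span B \<subseteq> V" using \<open>B \<subseteq> V\<close> less.prems(1) by (simp add: span_minimal)
      show "V \<subseteq> span B"
      proof
        fix x assume x: "x \<in> V"
        have "x - (v \<bullet> x) *\<^sub>R v \<in> V'" using x v vv less.prems(1)
          by (simp add: V'_def subspace_diff subspace_scale inner_diff_right)
        hence "x - (v \<bullet> x) *\<^sub>R v \<in> span B" using B'(4) span_mono[of B' B] by (auto simp: B_def)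
        moreover have "(v \<bullet> x) *\<^sub>R v \<in> span B" by (simp add: B_def span_base span_scale)
        ultimately have "(x - (v \<bullet> x) *\<^sub>R v) + (v \<bullet> x) *\<^sub>R v \<in> span B" by (rule span_add)
        thus "x \<in> span B" by simp
      qed
    qed
    ultimately show ?thesis by blast
  qed
qed

definition diagm :: "('n::finite \<Rightarrow> real) \<Rightarrow> real^'n^'n" where
  "diagm \<mu> = (\<chi> i j. if i = j then \<mu> i else 0)"

lemma spectral_matrix:
  fixes S :: "real^'n^'n" assumes sym: "transpose S = S"
  shows "\<exists>(U::real^'n^'n) \<mu>. transpose U ** U = mat 1 \<and> S ** U = U ** diagm \<mu>"
proof -
  obtain B where B: "pairwise orthogonal B" "\<forall>b\<in>B. norm b = 1 \<and> (\<exists>\<mu>. S *v b = \<mu> *\<^sub>R b)" "span B = UNIV"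
    using spectral_basis_aux[OF sym, of UNIV] by auto
  have 0: "0 \<notin> B" using B(2) by auto
  have ind: "independent B" by (rule pairwise_orthogonal_independent[OF B(1) 0])
  have fin: "finite B" using ind by (rule finiteI_independent)
  have "card B = dim (span B)" using ind by (metis dim_eq_card_independent dim_span)
  hence cB: "card B = CARD('n)" using B(3) by simp
  obtain g where g: "bij_betw g (UNIV::'n set) B"
    using finite_same_card_bij[OF finite_class.finite_UNIV fin] cB by auto
  have gB: "g i \<in> B" for i using g by (auto simp: bij_betw_def)
  have ginj: "g i = g j \<Longrightarrow> i = j" for i j using g by (auto simp: bij_betw_def inj_on_def)
  define \<mu> where "\<mu> i = (SOME m. S *v g i = m *\<^sub>R g i)" for i
  have ev: "S *v g i = \<mu> i *\<^sub>R g i" for i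
    unfolding \<mu>_def by (rule someI_ex) (use B(2) gB in blast)
  define U :: "real^'n^'n" where "U = (\<chi> j i. g i $ j)"
  have colU: "column i U = g i" for i by (simp add: U_def column_def vec_eq_iff)
  have "transpose U ** U = mat 1"
    unfolding matrix_mult_transpose_dot_column colU
  proof (simp add: vec_eq_iff mat_def, intro allI conjI impI)
    fix i j :: 'n
    show "g i \<bullet> g i = 1" using B(2) gB by (simp add: power2_norm_eq_inner[symmetric])
    assume "i \<noteq> j"
    hence "g i \<noteq> g j" using ginj by blast
    thus "g i \<bullet> g j = 0" using B(1) gB unfolding pairwise_def orthogonal_def by blast
  qed
  moreover have "S ** U = U ** diagm \<mu>"
  proof (simp add: vec_eq_iff, intro allI)
    fix j i
    have "(S ** U) $ j $ i = (S *v g i) $ j"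
      by (simp add: matrix_matrix_mult_def matrix_vector_mult_def U_def)
    also have "\<dots> = \<mu> i * g i $ j" by (simp add: ev)
    also have "\<dots> = (U ** diagm \<mu>) $ j $ i"
      by (simp add: matrix_matrix_mult_def U_def diagm_def if_distrib cong: if_cong)
    finally show "(S ** U) $ j $ i = (U ** diagm \<mu>) $ j $ i" .
  qed
  ultimately show ?thesis by blast
qed

lemma poly_entry_aux: "poly ((if b then [:0,1:] else 0) - [:m:]) t = (if b then t else 0) - (m::real)"
  by (cases b) (simp_all add: poly_diff)

lemma charpoly_poly: "poly (charpoly M) t = det (mat t - M)"
  unfolding charpoly_def det_def
  by (simp add: poly_sum poly_prod mat_def of_int_poly poly_entry_aux del: poly_diff)

lemma matrix_diff_ldistrib: "(A::real^'n^'m) ** (B - C) = A ** B - A ** C"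
  by (simp add: matrix_matrix_mult_def vec_eq_iff algebra_simps sum_subtractf)

lemma matrix_diff_rdistrib: "((A::real^'n^'m) - B) ** C = A ** C - B ** C"
  by (simp add: matrix_matrix_mult_def vec_eq_iff algebra_simps sum_subtractf)

lemma matrix_mul_mat_right: "(A::real^'n^'m) ** mat t = t *\<^sub>R A"
  by (simp add: matrix_matrix_mult_def vec_eq_iff mat_def if_distrib mult.commute cong: if_cong)

lemma scaleR_matrix_mul_left: "(t *\<^sub>R (A::real^'n^'m)) ** B = t *\<^sub>R (A ** B)"
  by (simp add: matrix_matrix_mult_def vec_eq_iff sum_distrib_left algebra_simps)

lemma order_lin: "order a [:-m, 1:] = (if a = (m::real) then 1 else 0)"
proof (cases "a = m")
  case True then show ?thesis using order_power_n_n[of m 1] by simp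
next
  case False then show ?thesis by (simp add: order_0I)
qed

lemma order_prod_lin:
  fixes \<mu> :: "'i \<Rightarrow> real"
  shows "finite I \<Longrightarrow> order a (\<Prod>i\<in>I. [:-\<mu> i, 1:]) = card {i\<in>I. \<mu> i = a}"
proof (induction I rule: finite_induct)
  case empty then show ?case by simp
next
  case (insert j I)
  have nz: "(\<Prod>i\<in>I. [:-\<mu> i, 1:]) \<noteq> 0" using insert.hyps(1) by (simp add: prod_zero_iff)
  have "order a (\<Prod>i\<in>insert j I. [:-\<mu> i, 1:]) = order a ([:-\<mu> j, 1:] * (\<Prod>i\<in>I. [:-\<mu> i, 1:]))"
    using insert.hyps by simp
  also have "\<dots> = (if a = \<mu> j then 1 else 0) + card {i\<in>I. \<mu> i = a}"
  proof -
    have nz2: "[:-\<mu> j, 1:] * (\<Prod>i\<in>I. [:-\<mu> i, 1:]) \<noteq> 0" using nz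
      by (metis mult_eq_0_iff pCons_eq_0_iff one_neq_zero)
    then show ?thesis by (simp only: order_mult[OF nz2] order_lin insert.IH)
  qed
  also have "\<dots> = card {i\<in>insert j I. \<mu> i = a}"
  proof (cases "\<mu> j = a")
    case True
    have "{i\<in>insert j I. \<mu> i = a} = insert j {i\<in>I. \<mu> i = a}" using True by auto
    then show ?thesis using True insert.hyps by simp
  next
    case False
    have "{i\<in>insert j I. \<mu> i = a} = {i\<in>I. \<mu> i = a}" using False by auto
    then show ?thesis using False by simp
  qed
  finally show ?case .
qed

lemma spectral_consequences:
  fixes S U :: "real^'n^'n"
  assumes UU: "transpose U ** U = mat 1" and SU: "S ** U = U ** diagm \<mu>"
  shows "det S = (\<Prod>i\<in>UNIV. \<mu> i)"
    and "charpoly S = (\<Prod>i\<in>UNIV. [:-\<mu> i, 1:])"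
    and "pos_eig_count S = card {i. \<mu> i > 0}"
    and "x \<bullet> (S *v x) = (\<Sum>i\<in>UNIV. \<mu> i * ((transpose U *v x) $ i)^2)"
proof -
  have UU': "U ** transpose U = mat 1" using UU matrix_left_right_inverse by blast
  have D: "transpose U ** S ** U = diagm \<mu>"
    by (metis SU UU matrix_mul_assoc matrix_mul_lid)
  have dU: "det (transpose U) * det U = 1" using UU by (metis det_I det_mul)
  have dd: "det (transpose U ** M ** U) = det M" for M :: "real^'n^'n"
    using dU by (simp add: det_mul)
  show dS: "det S = (\<Prod>i\<in>UNIV. \<mu> i)"
    using dd[of S] D by (simp add: det_diagonal diagm_def)
  have pt: "poly (charpoly S) t = poly (\<Prod>i\<in>UNIV. [:-\<mu> i, 1:]) t" for t
  proof -
    have "transpose U ** (mat t - S) ** U = t *\<^sub>R mat 1 - diagm \<mu>"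
      by (simp add: matrix_diff_ldistrib matrix_diff_rdistrib matrix_mul_mat_right
          scaleR_matrix_mul_left UU D)
    hence "det (mat t - S) = det (t *\<^sub>R mat 1 - diagm \<mu>)" using dd by metis
    also have "\<dots> = (\<Prod>i\<in>UNIV. t - \<mu> i)"
      by (subst det_diagonal) (simp_all add: diagm_def mat_def)
    finally show ?thesis by (simp add: charpoly_poly poly_prod)
  qed
  show cp: "charpoly S = (\<Prod>i\<in>UNIV. [:-\<mu> i, 1:])"
    using pt poly_eq_poly_eq_iff by blast
  have R: "{a. a > 0 \<and> poly (charpoly S) a = 0} = \<mu> ` {i. \<mu> i > 0}"
    by (auto simp: cp poly_prod prod_zero_iff)
  have "pos_eig_count S = (\<Sum>a\<in>\<mu> ` {i. \<mu> i > 0}. card {i. \<mu> i = a})"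
    unfolding pos_eig_count_def R by (simp add: cp order_prod_lin)
  also have "\<dots> = (\<Sum>a\<in>\<mu> ` {i. \<mu> i > 0}. card {i\<in>{i. \<mu> i > 0}. \<mu> i = a})"
    by (intro sum.cong refl arg_cong[where f=card]) auto
  also have "\<dots> = card {i. \<mu> i > 0}"
    using sum.image_gen[of "{i. \<mu> i > 0}" "\<lambda>_. (1::nat)" \<mu>] by simp
  finally show "pos_eig_count S = card {i. \<mu> i > 0}" .
  define y where "y = transpose U *v x"
  have xy: "x = U *v y" unfolding y_def matrix_vector_mul_assoc UU' by simp
  have tU: "(U *v y) \<bullet> z = y \<bullet> (transpose U *v z)" for z
    by (metis dot_lmul_matrix vector_transpose_matrix)
  have "x \<bullet> (S *v x) = y \<bullet> (transpose U *v (S *v (U *v y)))" by (simp only: xy tU)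
  also have "\<dots> = y \<bullet> ((transpose U ** S ** U) *v y)"
    by (simp only: matrix_vector_mul_assoc matrix_mul_assoc)
  also have "\<dots> = (\<Sum>i\<in>UNIV. \<mu> i * (y $ i)^2)"
  proof -
    have "(diagm \<mu> *v y) $ i = \<mu> i * y $ i" for i
    proof -
      have "(diagm \<mu> *v y) $ i = (\<Sum>j\<in>UNIV. (if i = j then \<mu> i else 0) * y $ j)"
        by (simp add: matrix_vector_mult_def diagm_def)
      also have "\<dots> = (\<Sum>j\<in>UNIV. if i = j then \<mu> i * y $ j else 0)"
        by (rule sum.cong) auto
      finally show ?thesis by simp
    qed
    thus ?thesis by (simp add: D inner_vec_def power2_eq_square algebra_simps)
  qed
  finally show "x \<bullet> (S *v x) = (\<Sum>i\<in>UNIV. \<mu> i * ((transpose U *v x) $ i)^2)" by (simp add: y_def)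
qed

lemma card4: "CARD(4) = 4" by simp

lemma inertia_2:
  fixes S :: "real^4^4"
  assumes sym: "transpose S = S" and dS: "det S > 0"
    and pos: "x \<bullet> (S *v x) > 0" and neg: "y \<bullet> (S *v y) < 0"
  shows "pos_eig_count S = 2"
proof -
  obtain U :: "real^4^4" and \<mu> where UU: "transpose U ** U = mat 1" and SU: "S ** U = U ** diagm \<mu>"
    using spectral_matrix[OF sym] by blast
  note sc = spectral_consequences[OF UU SU]
  define P where "P = {i. \<mu> i > 0}"
  define N where "N = {i. \<mu> i < 0}"
  have pr: "(\<Prod>i\<in>UNIV. \<mu> i) > 0" using dS sc(1) by simp
  have nz: "\<mu> i \<noteq> 0" for i
  proof
    assume "\<mu> i = 0"
    hence "(\<Prod>i\<in>UNIV. \<mu> i) = 0" using prod_zero[of UNIV \<mu>] \<open>\<mu> i = 0\<close> by auto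
    thus False using pr by linarith
  qed
  have PN: "P \<union> N = UNIV" "P \<inter> N = {}" using nz by (force simp: P_def N_def neq_iff)+
  have Pne: "P \<noteq> {}"
  proof
    assume "P = {}"
    hence "\<mu> i \<le> 0" for i by (auto simp: P_def not_less)
    hence "x \<bullet> (S *v x) \<le> 0" unfolding sc(4)[of x]
      by (intro sum_nonpos) (simp add: mult_nonpos_nonneg)
    thus False using pos by simp
  qed
  have Nne: "N \<noteq> {}"
  proof
    assume "N = {}"
    hence "\<mu> i \<ge> 0" for i by (auto simp: N_def not_less)
    hence "y \<bullet> (S *v y) \<ge> 0" unfolding sc(4)[of y]
      by (intro sum_nonneg) simp
    thus False using neg by simp
  qed
  have cPN: "card P + card N = 4"
    using card_Un_disjoint[of P N] PN card4 by simp
  have e1: "(\<Prod>i\<in>UNIV. \<mu> i) = (\<Prod>i\<in>P. \<mu> i) * (\<Prod>i\<in>N. \<mu> i)"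
    using prod.union_disjoint[of P N \<mu>] PN by simp
  have p1: "(\<Prod>i\<in>P. \<mu> i) > 0" by (rule prod_pos) (simp add: P_def)
  have e2: "(\<Prod>i\<in>N. \<mu> i) = (-1) ^ card N * (\<Prod>i\<in>N. - \<mu> i)"
  proof -
    have a: "(\<Prod>i\<in>N. (-1) * (- \<mu> i)) = (\<Prod>i\<in>N. (-1::real)) * (\<Prod>i\<in>N. - \<mu> i)"
      by (rule prod.distrib)
    have b: "(\<Prod>i\<in>N. (-1) * (- \<mu> i)) = (\<Prod>i\<in>N. \<mu> i)" by simp
    have c: "(\<Prod>i\<in>N. (-1::real)) = (-1)^card N" by simp
    show ?thesis using a b c by metis
  qed
  have p2: "(\<Prod>i\<in>N. - \<mu> i) > 0" by (rule prod_pos) (simp add: N_def)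
  have p4: "(\<Prod>i\<in>N. \<mu> i) > 0" by (metis e1 pr p1 zero_less_mult_pos)
  have "((-1::real) ^ card N) > 0" by (metis e2 p4 p2 zero_less_mult_pos2)
  hence evN: "even (card N)"
  proof -
    assume h: "((-1::real) ^ card N) > 0"
    show ?thesis
    proof (rule ccontr)
      assume "\<not> even (card N)"
      hence "(-1::real) ^ card N = -1" by simp
      thus False using h by simp
    qed
  qed
  have "card P \<ge> 1" "card N \<ge> 1" using Pne Nne
    by (simp_all add: Suc_leI card_gt_0_iff)
  with cPN evN have "card P = 2" by presburger
  thus ?thesis using sc(3) by (simp add: P_def)
qed

lemma minv: "invertible (A::'a::semiring_1^'n^'n) \<Longrightarrow> A ** matrix_inv A = mat 1 \<and> matrix_inv A ** A = mat 1"
  unfolding invertible_def matrix_inv_def by (rule someI_ex)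

lemma block_normal:
  fixes a b :: real assumes a0: "a \<noteq> 0"
  shows "\<exists>u t e. u \<noteq> 0 \<and> (e = -1 \<or> e = 1) \<and> u*u*a = e \<and> 2*t*u*a + u*u*b = 0"
proof -
  define u where "u = 1 / sqrt \<bar>a\<bar>"
  define t where "t = - u * b / (2 * a)"
  have sa: "sqrt \<bar>a\<bar> > 0" using a0 by simp
  have uu: "u * u = 1 / \<bar>a\<bar>" using sa by (simp add: u_def field_simps)
  have "u \<noteq> 0" using sa by (simp add: u_def)
  moreover have "sgn a = -1 \<or> sgn a = 1" using a0 by (simp add: sgn_if)
  moreover have "u*u*a = sgn a" using a0 uu by (simp add: sgn_if)
  moreover have "2*t*u*a + u*u*b = 0" using a0 by (simp add: t_def field_simps)
  ultimately show ?thesis by blast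
qed

lemma mat4_eq: "(M::'a^4^4) = N \<longleftrightarrow> (\<forall>i\<in>{1,2,3,4}. \<forall>j\<in>{1,2,3,4}. M$i$j = N$i$j)"
  by (simp add: vec_eq_iff forall_4)

lemma mm4: "((M::'a::semiring_1^4^4) ** N) $ i $ j = M$i$1 * N$1$j + M$i$2 * N$2$j + M$i$3 * N$3$j + M$i$4 * N$4$j"
  by (simp add: matrix_matrix_mult_def sum_4)

lemma jordan22_entries:
  "jordan22 l1 l2 $ 1 $ 1 = l1" "jordan22 l1 l2 $ 1 $ 2 = 1" "jordan22 l1 l2 $ 1 $ 3 = 0" "jordan22 l1 l2 $ 1 $ 4 = 0"
  "jordan22 l1 l2 $ 2 $ 1 = 0" "jordan22 l1 l2 $ 2 $ 2 = l1" "jordan22 l1 l2 $ 2 $ 3 = 0" "jordan22 l1 l2 $ 2 $ 4 = 0"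
  "jordan22 l1 l2 $ 3 $ 1 = 0" "jordan22 l1 l2 $ 3 $ 2 = 0" "jordan22 l1 l2 $ 3 $ 3 = l2" "jordan22 l1 l2 $ 3 $ 4 = 1"
  "jordan22 l1 l2 $ 4 $ 1 = 0" "jordan22 l1 l2 $ 4 $ 2 = 0" "jordan22 l1 l2 $ 4 $ 3 = 0" "jordan22 l1 l2 $ 4 $ 4 = l2"
  by (simp_all add: jordan22_def)

lemma test:
  fixes G :: "real^4^4"
  assumes gs: "\<And>i j. G$i$j = G$j$i" and hs: "\<And>i j. (G ** jordan22 l1 l2)$i$j = (G ** jordan22 l1 l2)$j$i"
    and l12: "l1 \<noteq> l2"
  shows "G$1$1 = 0" "G$1$3 = 0" "G$1$4 = 0" "G$2$3 = 0" "G$2$4 = 0" "G$3$3 = 0"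
proof -
  note h = hs[unfolded mm4 jordan22_entries]
  show "G$1$1 = 0" using h[of 1 2] gs[of 2 1] by (simp add: jordan22_entries)
  show g13: "G$1$3 = 0" using h[of 1 3] gs[of 3 1] l12 by (simp add: jordan22_entries)
  show g23: "G$2$3 = 0" using h[of 2 3] gs[of 3 1] gs[of 3 2] g13 l12 by (simp add: jordan22_entries)
  show g14: "G$1$4 = 0" using h[of 1 4] gs[of 4 1] g13 l12 by (simp add: jordan22_entries)
  show "G$2$4 = 0" using h[of 2 4] gs[of 4 1] gs[of 4 2] g23 g14 l12 by (simp add: jordan22_entries)
  show "G$3$3 = 0" using h[of 3 4] gs[of 4 3] by (simp add: jordan22_entries)
qed

lemma canonical_form:
  fixes A B :: "real^4^4"
  assumes symA: "transpose A = A" and symB: "transpose B = B" and seg: "segre22 A B l1 l2"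
  shows "\<exists>Q e1 e2. invertible Q \<and> (e1 = -1 \<or> e1 = 1) \<and> (e2 = -1 \<or> e2 = 1) \<and>
     transpose Q ** A ** Q = canonA22 e1 e2 \<and> transpose Q ** B ** Q = canonB22 e1 e2 l1 l2"
proof -
  let ?J = "jordan22 l1 l2"
  from seg obtain P where iA: "invertible A" and l12: "l1 \<noteq> l2" and iP: "invertible P"
     and PJ: "matrix_inv P ** (matrix_inv A ** B) ** P = ?J" by (auto simp: segre22_def)
  have BP: "A ** P ** ?J = B ** P"
  proof -
    have "A ** P ** ?J = A ** (P ** matrix_inv P) ** (matrix_inv A ** B) ** P"
      unfolding PJ[symmetric] by (simp add: matrix_mul_assoc)
    also have "\<dots> = (A ** matrix_inv A) ** B ** P" using minv[OF iP] by (simp add: matrix_mul_assoc)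
    also have "\<dots> = B ** P" using minv[OF iA] by simp
    finally show ?thesis .
  qed
  define G where "G = transpose P ** A ** P"
  have symG: "transpose G = G" by (simp add: G_def matrix_transpose_mul symA matrix_mul_assoc)
  have H: "transpose P ** B ** P = G ** ?J"
  proof -
    have "transpose P ** B ** P = transpose P ** (B ** P)" by (simp add: matrix_mul_assoc)
    also have "\<dots> = transpose P ** (A ** P ** ?J)" by (simp add: BP)
    finally show ?thesis by (simp add: G_def matrix_mul_assoc)
  qed
  have symH: "transpose (G ** ?J) = G ** ?J"
    unfolding H[symmetric] by (simp add: matrix_transpose_mul symB matrix_mul_assoc)
  have gs: "G$i$j = G$j$i" for i j
    by (subst symG[symmetric]) (simp add: transpose_def)
  have hs: "(G ** ?J)$i$j = (G ** ?J)$j$i" for i j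
    by (subst symH[symmetric]) (simp add: transpose_def)
  note z = test[OF gs hs l12]
  define a where "a = G$1$2"
  define b where "b = G$2$2"
  define c where "c = G$3$4"
  define d where "d = G$4$4"
  have Gexp: "G = vector [vector [0, a, 0, 0], vector [a, b, 0, 0], vector [0, 0, 0, c], vector [0, 0, c, d]]"
    unfolding mat4_eq using z gs[of 2 1] gs[of 3 1] gs[of 4 1] gs[of 3 2] gs[of 4 2] gs[of 4 3]
    by (simp add: a_def b_def c_def d_def)
  have "det G \<noteq> 0"
  proof -
    have "det G = det (transpose P) * det A * det P" by (simp add: G_def det_mul)
    moreover have "det A \<noteq> 0" "det P \<noteq> 0" using iA iP by (simp_all add: invertible_det_nz)
    ultimately show ?thesis by simp
  qed
  hence "a*a*c*c \<noteq> 0" unfolding Gexp det_4 by (simp add: algebra_simps)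
  hence a0: "a \<noteq> 0" and c0: "c \<noteq> 0" by auto
  obtain u1 t1 e1 where b1: "u1 \<noteq> 0" "e1 = -1 \<or> e1 = 1" "u1*u1*a = e1" "2*t1*u1*a + u1*u1*b = 0"
    using block_normal[OF a0] by blast
  obtain u2 t2 e2 where b2: "u2 \<noteq> 0" "e2 = -1 \<or> e2 = 1" "u2*u2*c = e2" "2*t2*u2*c + u2*u2*d = 0"
    using block_normal[OF c0] by blast
  define R :: "real^4^4" where "R = vector [vector [u1, t1, 0, 0], vector [0, u1, 0, 0], vector [0, 0, u2, t2], vector [0, 0, 0, u2]]"
  have "det R \<noteq> 0" using b1(1) b2(1) unfolding R_def det_4 by simp
  hence iR: "invertible R" by (simp add: invertible_det_nz)
  define Q where "Q = P ** R"
  have iQ: "invertible Q" using iP iR by (simp add: Q_def invertible_mult)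
  have QA: "transpose Q ** A ** Q = transpose R ** G ** R"
    by (simp add: Q_def G_def matrix_transpose_mul matrix_mul_assoc)
  have QB: "transpose Q ** B ** Q = transpose R ** (G ** ?J) ** R"
    by (simp add: Q_def H[symmetric] matrix_transpose_mul matrix_mul_assoc)
  have "transpose R ** G ** R = canonA22 e1 e2"
    unfolding mat4_eq Gexp R_def
    apply (simp add: mm4 transpose_def canonA22_def)
    using b1(3,4) b2(3,4) by (simp add: algebra_simps; linarith)
  moreover have "transpose R ** (G ** ?J) ** R = canonB22 e1 e2 l1 l2"
    unfolding mat4_eq Gexp R_def
    apply (simp add: mm4 transpose_def canonB22_def jordan22_entries)
    using b1(3) b2(3) arg_cong[OF b1(4), of "\<lambda>x. l1 * x"] arg_cong[OF b2(4), of "\<lambda>x. l2 * x"]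
    by (simp add: algebra_simps; linarith)
  ultimately have eqs: "transpose Q ** A ** Q = canonA22 e1 e2 \<and> transpose Q ** B ** Q = canonB22 e1 e2 l1 l2"
    using QA QB by (simp only:)
  show ?thesis
    apply (rule exI[of _ Q], rule exI[of _ e1], rule exI[of _ e2])
    using iQ b1(2) b2(2) eqs by simp
qed

lemma cmat_mult: "cmat (M ** N) = cmat M ** cmat N"
  by (simp add: cmat_def matrix_matrix_mult_def vec_eq_iff)

lemma cmat_transpose: "cmat (transpose M) = transpose (cmat M)"
  by (simp add: cmat_def transpose_def vec_eq_iff)

lemma cmat_mat1: "cmat (mat 1) = mat 1"
  by (simp add: cmat_def mat_def vec_eq_iff)

lemma cvec_mult: "cvec (M *v v) = cmat M *v cvec v"
  by (simp add: cvec_def cmat_def matrix_vector_mult_def vec_eq_iff)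

lemma cvec_add: "cvec (u + v) = cvec u + cvec v"
  by (simp add: cvec_def vec_eq_iff)

lemma cvec_scale: "cvec (a *\<^sub>R u) = complex_of_real a *s cvec u"
  by (simp add: cvec_def vec_eq_iff)

lemma mv_smult: "(C::complex^'n^'m) *v (c *s x) = c *s (C *v x)"
  by (simp add: matrix_vector_mult_def vec_eq_iff sum_distrib_left mult_ac)

definition bil :: "complex^'n \<Rightarrow> complex^'n \<Rightarrow> complex" where
  "bil X Z = (\<Sum>i\<in>UNIV. X$i * Z$i)"

lemma qform_bil: "qform M X = bil X (cmat M *v X)"
  by (simp add: qform_def bil_def cmat_def matrix_vector_mult_def sum_distrib_left mult_ac)

lemma bil_mv: "bil ((C::complex^'n^'m) *v Y) Z = bil Y (transpose C *v Z)"
proof -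
  have "bil (C *v Y) Z = (\<Sum>i\<in>UNIV. \<Sum>k\<in>UNIV. C$i$k * Y$k * Z$i)"
    by (simp add: bil_def matrix_vector_mult_def sum_distrib_right)
  also have "\<dots> = (\<Sum>k\<in>UNIV. \<Sum>i\<in>UNIV. C$i$k * Y$k * Z$i)" by (rule sum.swap)
  also have "\<dots> = bil Y (transpose C *v Z)"
    by (simp add: bil_def matrix_vector_mult_def transpose_def sum_distrib_left mult_ac)
  finally show ?thesis .
qed

lemma qform_transform: "qform A (cmat Q *v Y) = qform (transpose Q ** A ** Q) Y"
  unfolding qform_bil bil_mv
  by (simp add: cmat_mult cmat_transpose matrix_vector_mul_assoc matrix_mul_assoc)

lemma image_char:
  assumes surj: "\<And>X. f (g X) = X" and ch: "\<And>Y. f Y \<in> T \<longleftrightarrow> Y \<in> S"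
  shows "T = f ` S"
proof
  show "T \<subseteq> f ` S"
  proof
    fix X assume "X \<in> T"
    hence "f (g X) \<in> T" using surj by simp
    hence "g X \<in> S" using ch by blast
    thus "X \<in> f ` S" using surj by (metis image_eqI)
  qed
  show "f ` S \<subseteq> T" using ch by blast
qed

lemma image_lemmas:
  fixes Q :: "real^4^4"
  assumes iQ: "invertible Q"
  shows "qsic A B = (\<lambda>Y. cmat Q *v Y) ` qsic (transpose Q ** A ** Q) (transpose Q ** B ** Q)"
    and "real_line (Q *v u) (Q *v v) = (\<lambda>Y. cmat Q *v Y) ` real_line u v"
    and "space_cubic (Q ** M) = (\<lambda>Y. cmat Q *v Y) ` space_cubic M"
    and "real_point (Q *v p) = (\<lambda>Y. cmat Q *v Y) ` real_point p"
    and "inj (\<lambda>Y. cmat Q *v Y)"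
proof -
  obtain Qi where QQi: "Q ** Qi = mat 1" "Qi ** Q = mat 1" using iQ unfolding invertible_def by blast
  let ?f = "\<lambda>Y. cmat Q *v Y"
  let ?g = "\<lambda>X. cmat Qi *v X"
  have fg: "?f (?g X) = X" for X
    by (simp add: matrix_vector_mul_assoc cmat_mult[symmetric] QQi cmat_mat1)
  have gf: "?g (?f Y) = Y" for Y
    by (simp add: matrix_vector_mul_assoc cmat_mult[symmetric] QQi cmat_mat1)
  have finj: "?f Y = ?f Z \<longleftrightarrow> Y = Z" for Y Z by (metis gf)
  have f0: "?f Y = 0 \<longleftrightarrow> Y = 0" for Y using finj[of Y 0] by simp
  show "inj ?f" using finj by (simp add: inj_def)
  show "qsic A B = ?f ` qsic (transpose Q ** A ** Q) (transpose Q ** B ** Q)"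
    by (rule image_char[of ?f ?g, OF fg]) (simp add: qsic_def f0 qform_transform)
  show "real_line (Q *v u) (Q *v v) = ?f ` real_line u v"
  proof (rule image_char[of ?f ?g, OF fg])
    fix Y
    have e: "a *s cvec (Q *v u) + b *s cvec (Q *v v) = ?f (a *s cvec u + b *s cvec v)" for a b
      by (simp add: cvec_mult matrix_vector_right_distrib mv_smult)
    show "?f Y \<in> real_line (Q *v u) (Q *v v) \<longleftrightarrow> Y \<in> real_line u v"
      unfolding real_line_def by (simp add: e finj f0)
  qed
  show "space_cubic (Q ** M) = ?f ` space_cubic M"
  proof (rule image_char[of ?f ?g, OF fg])
    fix Y
    show "?f Y \<in> space_cubic (Q ** M) \<longleftrightarrow> Y \<in> space_cubic M"
      unfolding space_cubic_def by (simp add: cmat_mult matrix_vector_mul_assoc[symmetric] finj)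
  qed
  show "real_point (Q *v p) = ?f ` real_point p"
  proof (rule image_char[of ?f ?g, OF fg])
    fix Y
    show "?f Y \<in> real_point (Q *v p) \<longleftrightarrow> Y \<in> real_point p"
      unfolding real_point_def by (simp add: cvec_mult mv_smult[symmetric] finj)
  qed
qed

definition u0 :: "real^4" where "u0 = vector [1, 0, 0, 0]"
definition v0 :: "real^4" where "v0 = vector [0, 0, 1, 0]"
definition M0 :: "real \<Rightarrow> real \<Rightarrow> real \<Rightarrow> real \<Rightarrow> real^4^4" where
  "M0 e1 e2 l1 l2 = vector [vector [0, e1*e2, 0, 1], vector [0, 2*(l2-l1)*(e1*e2), 0, 0],
                           vector [-1, 0, -(e1*e2), 0], vector [0, 0, 2*(l2-l1)*(e1*e2), 0]]"

lemma qA: "qform (canonA22 e1 e2) Y = 2 * of_real e1 * Y$1 * Y$2 + 2 * of_real e2 * Y$3 * Y$4"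
  by (simp add: qform_def sum_4 canonA22_def algebra_simps)

lemma qB: "qform (canonB22 e1 e2 l1 l2) Y = 2 * of_real e1 * of_real l1 * Y$1 * Y$2 + of_real e1 * Y$2^2
   + 2 * of_real e2 * of_real l2 * Y$3 * Y$4 + of_real e2 * Y$4^2"
  by (simp add: qform_def sum_4 canonB22_def algebra_simps power2_eq_square)

lemma cub: "cmat (M0 e1 e2 l1 l2) *v vector [s^3, s^2*t, s*t^2, t^3] =
  vector [of_real (e1*e2) * s^2*t + t^3, 2 * of_real (l2-l1) * of_real (e1*e2) * s^2*t,
          (- (s^3)) - of_real (e1*e2) * s*t^2, 2 * of_real (l2-l1) * of_real (e1*e2) * s*t^2]"
  by (simp add: cmat_def M0_def matrix_vector_mult_def sum_4 vec_eq_iff forall_4 algebra_simps)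

lemma line0: "Y \<in> real_line u0 v0 \<longleftrightarrow> Y \<noteq> 0 \<and> Y$2 = 0 \<and> Y$4 = 0"
proof -
  have "(\<exists>a b. Y = a *s cvec u0 + b *s cvec v0) \<longleftrightarrow> Y$2 = 0 \<and> Y$4 = 0"
  proof
    assume "\<exists>a b. Y = a *s cvec u0 + b *s cvec v0"
    thus "Y$2 = 0 \<and> Y$4 = 0" by (auto simp: u0_def v0_def cvec_def)
  next
    assume h: "Y$2 = 0 \<and> Y$4 = 0"
    have "Y = Y$1 *s cvec u0 + Y$3 *s cvec v0"
      using h by (simp add: u0_def v0_def cvec_def vec_eq_iff forall_4)
    thus "\<exists>a b. Y = a *s cvec u0 + b *s cvec v0" by blast
  qed
  thus ?thesis by (simp add: real_line_def)
qed

lemma pt_u0: "Y \<in> real_point u0 \<longleftrightarrow> Y$1 \<noteq> 0 \<and> Y$2 = 0 \<and> Y$3 = 0 \<and> Y$4 = 0"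
proof
  assume "Y \<in> real_point u0"
  thus "Y$1 \<noteq> 0 \<and> Y$2 = 0 \<and> Y$3 = 0 \<and> Y$4 = 0" by (auto simp: real_point_def u0_def cvec_def)
next
  assume h: "Y$1 \<noteq> 0 \<and> Y$2 = 0 \<and> Y$3 = 0 \<and> Y$4 = 0"
  have "Y = Y$1 *s cvec u0" using h by (simp add: u0_def cvec_def vec_eq_iff forall_4)
  thus "Y \<in> real_point u0" using h unfolding real_point_def by blast
qed

lemma pt_v0: "Y \<in> real_point v0 \<longleftrightarrow> Y$3 \<noteq> 0 \<and> Y$1 = 0 \<and> Y$2 = 0 \<and> Y$4 = 0"
proof
  assume "Y \<in> real_point v0"
  thus "Y$3 \<noteq> 0 \<and> Y$1 = 0 \<and> Y$2 = 0 \<and> Y$4 = 0" by (auto simp: real_point_def v0_def cvec_def)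
next
  assume h: "Y$3 \<noteq> 0 \<and> Y$1 = 0 \<and> Y$2 = 0 \<and> Y$4 = 0"
  have "Y = Y$3 *s cvec v0" using h by (simp add: v0_def cvec_def vec_eq_iff forall_4)
  thus "Y \<in> real_point v0" using h unfolding real_point_def by blast
qed

lemma cube_root: "\<exists>z::complex. z^3 = w"
proof (cases "w = 0")
  case True then show ?thesis by (intro exI[of _ 0]) simp
next
  case False
  have "exp (Ln w / 3) ^ 3 = exp (of_nat 3 * (Ln w / 3))" by (simp only: exp_of_nat_mult)
  also have "\<dots> = w" using False by simp
  finally show ?thesis by blast
qed

lemma vec4_eq: "(Y::'a^4) = Z \<longleftrightarrow> Y$1 = Z$1 \<and> Y$2 = Z$2 \<and> Y$3 = Z$3 \<and> Y$4 = Z$4"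
  by (simp add: vec_eq_iff forall_4)

lemma nz4: "(Y::'a::zero^4) \<noteq> 0 \<longleftrightarrow> Y$1 \<noteq> 0 \<or> Y$2 \<noteq> 0 \<or> Y$3 \<noteq> 0 \<or> Y$4 \<noteq> 0"
  by (auto simp: vec_eq_iff forall_4)

lemma canon_qsic:
  fixes e1 e2 l1 l2 :: real
  assumes e1: "e1 = -1 \<or> e1 = 1" and e2: "e2 = -1 \<or> e2 = 1" and l12: "l1 \<noteq> l2"
  shows "qsic (canonA22 e1 e2) (canonB22 e1 e2 l1 l2) = real_line u0 v0 \<union> space_cubic (M0 e1 e2 l1 l2)"
    and "real_line u0 v0 \<inter> space_cubic (M0 e1 e2 l1 l2) = real_point u0 \<union> real_point v0"
proof -
  define E1 where "E1 = complex_of_real e1"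
  define E2 where "E2 = complex_of_real e2"
  define L1 where "L1 = complex_of_real l1"
  define L2 where "L2 = complex_of_real l2"
  define K where "K = complex_of_real (e1*e2)"
  define D where "D = complex_of_real (l2-l1)"
  have E1s: "E1*E1 = 1" using e1 by (auto simp: E1_def)
  have E2s: "E2*E2 = 1" using e2 by (auto simp: E2_def)
  have Kd: "K = E1*E2" by (simp add: K_def E1_def E2_def)
  have Dd: "D = L2 - L1" by (simp add: D_def L1_def L2_def)
  have D0: "D \<noteq> 0" using l12 by (simp add: D_def)
  have K0: "K \<noteq> 0" using e1 e2 by (auto simp: K_def)
  define cb where "cb s t = cmat (M0 e1 e2 l1 l2) *v vector [s^3, s^2*t, s*t^2, t^3]" for s t :: complex
  have cbc: "cb s t $ 1 = K * s^2*t + t^3" "cb s t $ 2 = 2 * D * K * s^2*t"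
     "cb s t $ 3 = - (s^3) - K * s*t^2" "cb s t $ 4 = 2 * D * K * s*t^2" for s t
    by (simp_all add: cb_def cub K_def D_def)
  have cubic_eq: "space_cubic (M0 e1 e2 l1 l2) = {cb s t | s t. (s, t) \<noteq> (0, 0)}"
    by (simp add: space_cubic_def cb_def)
  have cubic_mem: "Y \<in> space_cubic (M0 e1 e2 l1 l2) \<longleftrightarrow> (\<exists>s t. (s, t) \<noteq> (0, 0) \<and> Y = cb s t)" for Y
    unfolding cubic_eq by blast
  have inq: "Y \<in> qsic (canonA22 e1 e2) (canonB22 e1 e2 l1 l2) \<longleftrightarrow>
      Y \<noteq> 0 \<and> 2 * E1 * Y$1 * Y$2 + 2 * E2 * Y$3 * Y$4 = 0 \<and>
      2 * E1 * L1 * Y$1 * Y$2 + E1 * Y$2^2 + 2 * E2 * L2 * Y$3 * Y$4 + E2 * Y$4^2 = 0" for Y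
    by (simp add: qsic_def qA qB E1_def E2_def L1_def L2_def)
  show "qsic (canonA22 e1 e2) (canonB22 e1 e2 l1 l2) = real_line u0 v0 \<union> space_cubic (M0 e1 e2 l1 l2)"
  proof (intro equalityI subsetI)
    fix Y assume "Y \<in> qsic (canonA22 e1 e2) (canonB22 e1 e2 l1 l2)"
    hence Y0: "Y \<noteq> 0" and qa: "2 * E1 * Y$1 * Y$2 + 2 * E2 * Y$3 * Y$4 = 0"
      and qb: "2 * E1 * L1 * Y$1 * Y$2 + E1 * Y$2^2 + 2 * E2 * L2 * Y$3 * Y$4 + E2 * Y$4^2 = 0"
      using inq by auto
    show "Y \<in> real_line u0 v0 \<union> space_cubic (M0 e1 e2 l1 l2)"
    proof (cases "Y$2 = 0 \<and> Y$4 = 0")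
      case True then show ?thesis using Y0 by (simp add: line0)
    next
      case False
      have y2: "Y$2 \<noteq> 0"
      proof
        assume h: "Y$2 = 0"
        have "(Y$4)^2 = 0" using qa qb h E2s by algebra
        thus False using h False by simp
      qed
      have y4: "Y$4 \<noteq> 0"
      proof
        assume h: "Y$4 = 0"
        have "(Y$2)^2 = 0" using qa qb h E1s by algebra
        thus False using y2 by simp
      qed
      define \<rho> where "\<rho> = 2 * D * K * Y$2 * Y$4"
      have \<rho>0: "\<rho> \<noteq> 0" using D0 K0 y2 y4 by (simp add: \<rho>_def)
      have c1: "K * (Y$2)^2 * Y$4 + (Y$4)^3 = \<rho> * Y$1"
        unfolding \<rho>_def Kd Dd using qa qb E1s E2s by algebra
      have c3: "- ((Y$2)^3) - K * Y$2 * (Y$4)^2 = \<rho> * Y$3"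
        unfolding \<rho>_def Kd Dd using qa qb E1s E2s by algebra
      obtain \<sigma> where \<sigma>: "\<sigma>^3 = 1 / \<rho>" using cube_root by blast
      have \<sigma>0: "\<sigma> \<noteq> 0" using \<sigma> \<rho>0 by auto
      have \<sigma>\<rho>: "\<sigma>^3 * \<rho> = 1" using \<sigma> \<rho>0 by simp
      have "cb (\<sigma> * Y$2) (\<sigma> * Y$4) = Y"
        unfolding vec4_eq cbc
      proof (intro conjI)
        show "K * (\<sigma> * Y$2)^2 * (\<sigma> * Y$4) + (\<sigma> * Y$4)^3 = Y$1"
        proof -
          have "K * (\<sigma> * Y$2)^2 * (\<sigma> * Y$4) + (\<sigma> * Y$4)^3 = \<sigma>^3 * (K * (Y$2)^2 * Y$4 + (Y$4)^3)"
            by (simp add: algebra_simps power2_eq_square power3_eq_cube)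
          also have "\<dots> = \<sigma>^3 * \<rho> * Y$1" using c1 by simp
          finally show ?thesis using \<sigma>\<rho> by simp
        qed
        show "2 * D * K * (\<sigma> * Y$2)^2 * (\<sigma> * Y$4) = Y$2"
        proof -
          have "2 * D * K * (\<sigma> * Y$2)^2 * (\<sigma> * Y$4) = (\<sigma>^3 * \<rho>) * Y$2"
            by (simp add: \<rho>_def algebra_simps power2_eq_square power3_eq_cube)
          thus ?thesis using \<sigma>\<rho> by simp
        qed
        show "- ((\<sigma> * Y$2)^3) - K * (\<sigma> * Y$2) * (\<sigma> * Y$4)^2 = Y$3"
        proof -
          have "- ((\<sigma> * Y$2)^3) - K * (\<sigma> * Y$2) * (\<sigma> * Y$4)^2 = \<sigma>^3 * (- ((Y$2)^3) - K * Y$2 * (Y$4)^2)"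
            by (simp add: algebra_simps power2_eq_square power3_eq_cube)
          also have "\<dots> = \<sigma>^3 * \<rho> * Y$3" using c3 by simp
          finally show ?thesis using \<sigma>\<rho> by simp
        qed
        show "2 * D * K * (\<sigma> * Y$2) * (\<sigma> * Y$4)^2 = Y$4"
        proof -
          have "2 * D * K * (\<sigma> * Y$2) * (\<sigma> * Y$4)^2 = (\<sigma>^3 * \<rho>) * Y$4"
            by (simp add: \<rho>_def algebra_simps power2_eq_square power3_eq_cube)
          thus ?thesis using \<sigma>\<rho> by simp
        qed
      qed
      moreover have "(\<sigma> * Y$2, \<sigma> * Y$4) \<noteq> (0, 0)" using \<sigma>0 y2 by simp
      ultimately have "Y \<in> space_cubic (M0 e1 e2 l1 l2)" unfolding cubic_mem by (intro exI[of _ "\<sigma> * Y$2"] exI[of _ "\<sigma> * Y$4"]) simp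
      thus ?thesis by blast
    qed
  next
    fix Y assume "Y \<in> real_line u0 v0 \<union> space_cubic (M0 e1 e2 l1 l2)"
    thus "Y \<in> qsic (canonA22 e1 e2) (canonB22 e1 e2 l1 l2)"
    proof
      assume "Y \<in> real_line u0 v0"
      thus ?thesis by (simp add: line0 inq)
    next
      assume "Y \<in> space_cubic (M0 e1 e2 l1 l2)"
      then obtain s t where st: "(s, t) \<noteq> (0, 0)" and Y: "Y = cb s t" unfolding cubic_mem by auto
      have "Y \<noteq> 0"
      proof (cases "s = 0")
        case True
        then have "t \<noteq> 0" using st by simp
        thus ?thesis using True by (simp add: Y nz4 cbc)
      next
        case False
        show ?thesis
        proof (cases "t = 0")
          case True thus ?thesis using False by (simp add: Y nz4 cbc)
        next
          case False2: False
          thus ?thesis using False D0 K0 by (simp add: Y nz4 cbc)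
        qed
      qed
      moreover have "2 * E1 * Y$1 * Y$2 + 2 * E2 * Y$3 * Y$4 = 0"
        unfolding Y cbc Kd using E1s E2s by algebra
      moreover have "2 * E1 * L1 * Y$1 * Y$2 + E1 * Y$2^2 + 2 * E2 * L2 * Y$3 * Y$4 + E2 * Y$4^2 = 0"
        unfolding Y cbc Kd Dd using E1s E2s by algebra
      ultimately show ?thesis by (simp add: inq)
    qed
  qed
  show "real_line u0 v0 \<inter> space_cubic (M0 e1 e2 l1 l2) = real_point u0 \<union> real_point v0"
  proof (intro equalityI subsetI)
    fix Y assume "Y \<in> real_line u0 v0 \<inter> space_cubic (M0 e1 e2 l1 l2)"
    hence Yl: "Y \<in> real_line u0 v0" and Yc: "Y \<in> space_cubic (M0 e1 e2 l1 l2)" by auto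
    from Yc obtain s t where st: "(s, t) \<noteq> (0, 0)" and Y: "Y = cb s t" unfolding cubic_mem by auto
    from Yl have l: "Y \<noteq> 0" "Y$2 = 0" "Y$4 = 0" by (simp_all add: line0)
    have "s = 0 \<or> t = 0" using l(2) D0 K0 by (simp add: Y cbc)
    thus "Y \<in> real_point u0 \<union> real_point v0"
    proof
      assume s0: "s = 0"
      hence "t \<noteq> 0" using st by simp
      thus ?thesis using s0 by (simp add: pt_u0 Y cbc)
    next
      assume t0: "t = 0"
      hence "s \<noteq> 0" using st by simp
      thus ?thesis using t0 by (simp add: pt_v0 Y cbc)
    qed
  next
    fix Y assume "Y \<in> real_point u0 \<union> real_point v0"
    thus "Y \<in> real_line u0 v0 \<inter> space_cubic (M0 e1 e2 l1 l2)"
    proof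
      assume h: "Y \<in> real_point u0"
      hence hh: "Y$1 \<noteq> 0" "Y$2 = 0" "Y$3 = 0" "Y$4 = 0" by (simp_all add: pt_u0)
      obtain \<tau> where \<tau>: "\<tau>^3 = Y$1" using cube_root by blast
      have "\<tau> \<noteq> 0" using \<tau> hh by auto
      moreover have "cb 0 \<tau> = Y" using \<tau> hh by (simp add: vec4_eq cbc)
      ultimately have "Y \<in> space_cubic (M0 e1 e2 l1 l2)" unfolding cubic_mem by auto
      moreover have "Y \<in> real_line u0 v0" using hh by (simp add: line0 nz4)
      ultimately show ?thesis by blast
    next
      assume h: "Y \<in> real_point v0"
      hence hh: "Y$3 \<noteq> 0" "Y$1 = 0" "Y$2 = 0" "Y$4 = 0" by (simp_all add: pt_v0)
      obtain \<tau> where \<tau>: "\<tau>^3 = - Y$3" using cube_root by blast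
      have "\<tau> \<noteq> 0" using \<tau> hh by auto
      moreover have "cb \<tau> 0 = Y" using \<tau> hh by (simp add: vec4_eq cbc)
      ultimately have "Y \<in> space_cubic (M0 e1 e2 l1 l2)" unfolding cubic_mem by auto
      moreover have "Y \<in> real_line u0 v0" using hh by (simp add: line0 nz4)
      ultimately show ?thesis by blast
    qed
  qed
qed

lemma matrix_scaleR_right: "(A::real^'n^'m) ** (t *\<^sub>R B) = t *\<^sub>R (A ** B)"
  by (simp add: matrix_matrix_mult_def vec_eq_iff sum_distrib_left algebra_simps)

lemma quad_transform:
  fixes Q S :: "real^'n^'n"
  shows "(Q *v y) \<bullet> (S *v (Q *v y)) = y \<bullet> ((transpose Q ** S ** Q) *v y)"
proof -
  have tU: "(Q *v y) \<bullet> z = y \<bullet> (transpose Q *v z)" for z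
  proof -
    have "(Q *v y) = y v* transpose Q" by simp
    thus ?thesis by (simp only: dot_lmul_matrix)
  qed
  have "(Q *v y) \<bullet> (S *v (Q *v y)) = y \<bullet> (transpose Q *v (S *v (Q *v y)))" by (rule tU)
  also have "\<dots> = y \<bullet> ((transpose Q ** S ** Q) *v y)"
    by (simp only: matrix_vector_mul_assoc matrix_mul_assoc)
  finally show ?thesis .
qed

lemma inner4: "(x::real^4) \<bullet> y = x$1 * y$1 + x$2 * y$2 + x$3 * y$3 + x$4 * y$4"
  by (simp add: inner_vec_def sum_4)

lemma mv4: "((M::'a::semiring_1^4^4) *v x) $ i = M$i$1 * x$1 + M$i$2 * x$2 + M$i$3 * x$3 + M$i$4 * x$4"
  by (simp add: matrix_vector_mult_def sum_4)

lemma Id_two: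
  fixes A B Q :: "real^4^4"
  assumes symA: "transpose A = A" and symB: "transpose B = B" and iQ: "invertible Q"
    and e1: "e1 = -1 \<or> e1 = 1" and e2: "e2 = -1 \<or> e2 = 1"
    and QA: "transpose Q ** A ** Q = canonA22 e1 e2" and QB: "transpose Q ** B ** Q = canonB22 e1 e2 l1 l2"
    and l: "l \<noteq> l1" "l \<noteq> l2"
  shows "Id_pencil A B l = 2"
proof -
  define S where "S = l *\<^sub>R A - B"
  have "transpose S = l *\<^sub>R transpose A - transpose B" by (simp add: S_def transpose_def vec_eq_iff)
  hence symS: "transpose S = S" by (simp add: symA symB S_def)
  define D where "D = l *\<^sub>R canonA22 e1 e2 - canonB22 e1 e2 l1 l2"
  have QS: "transpose Q ** S ** Q = D"
    by (simp add: S_def D_def matrix_diff_ldistrib matrix_diff_rdistrib matrix_scaleR_right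
        scaleR_matrix_mul_left QA QB)
  have dD: "det D = (l - l1)^2 * (l - l2)^2"
    using e1 e2 by (auto simp: D_def det_4 canonA22_def canonB22_def power2_eq_square algebra_simps)
  have "det D = det Q * det Q * det S"
    unfolding QS[symmetric] by (simp add: det_mul)
  moreover have "det Q \<noteq> 0" using iQ by (simp add: invertible_det_nz)
  moreover have "det D > 0" using dD l by simp
  ultimately have dS: "det S > 0"
  proof -
    assume a: "det D = det Q * det Q * det S" and b: "det Q \<noteq> 0" and c: "det D > 0"
    have "det Q * det Q > 0" using b by (metis not_real_square_gt_zero)
    thus ?thesis using a c zero_less_mult_pos by metis
  qed
  define yp :: "real^4" where "yp = vector [1 / (l - l1), 1, 0, 0]"
  define ym :: "real^4" where "ym = vector [0, 1, 0, 0]"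
  have vp: "yp \<bullet> (D *v yp) = e1"
    using l by (simp add: yp_def D_def inner4 mv4 canonA22_def canonB22_def field_simps)
  have vm: "ym \<bullet> (D *v ym) = - e1"
    by (simp add: ym_def D_def inner4 mv4 canonA22_def canonB22_def)
  have qp: "(Q *v yp) \<bullet> (S *v (Q *v yp)) = e1" using vp by (simp add: quad_transform QS)
  have qm: "(Q *v ym) \<bullet> (S *v (Q *v ym)) = - e1" using vm by (simp add: quad_transform QS)
  have "pos_eig_count S = 2"
    using e1
  proof
    assume "e1 = -1"
    thus ?thesis using inertia_2[OF symS dS, of "Q *v ym" "Q *v yp"] qp qm by simp
  next
    assume "e1 = 1"
    thus ?thesis using inertia_2[OF symS dS, of "Q *v yp" "Q *v ym"] qp qm by simp
  qed
  thus ?thesis by (simp add: Id_pencil_def S_def)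
qed

lemma M0_invertible:
  assumes e1: "e1 = -1 \<or> e1 = 1" and e2: "e2 = -1 \<or> e2 = 1" and l12: "l1 \<noteq> l2"
  shows "invertible (M0 e1 e2 l1 l2)"
proof -
  have "det (M0 e1 e2 l1 l2) = - 4 * (l2 - l1)^2"
    using e1 e2 by (auto simp: M0_def det_4 power2_eq_square algebra_simps)
  hence "det (M0 e1 e2 l1 l2) \<noteq> 0" using l12 by simp
  thus ?thesis by (simp add: invertible_det_nz)
qed

lemma lin_indep_Q:
  fixes Q :: "real^4^4" assumes iQ: "invertible Q"
  shows "lin_indep2 (Q *v u0) (Q *v v0)"
  unfolding lin_indep2_def
proof (intro allI impI)
  fix a b :: real
  assume h: "a *\<^sub>R (Q *v u0) + b *\<^sub>R (Q *v v0) = 0"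
  obtain Qi where QQi: "Qi ** Q = mat 1" using iQ unfolding invertible_def by blast
  have "Q *v (a *\<^sub>R u0 + b *\<^sub>R v0) = 0" using h by (simp add: matrix_vector_right_distrib matrix_vector_mult_scaleR)
  hence "Qi *v (Q *v (a *\<^sub>R u0 + b *\<^sub>R v0)) = 0" by simp
  hence "a *\<^sub>R u0 + b *\<^sub>R v0 = 0" by (simp add: matrix_vector_mul_assoc QQi)
  thus "a = 0 \<and> b = 0" by (simp add: u0_def v0_def vec4_eq)
qed

theorem theorem9:
  fixes A B :: "real^4^4" and l1 l2 c :: real
  assumes symA: "sym_mat A" and symB: "sym_mat B"
    and not_zero: "\<exists>l. det (l *\<^sub>R A - B) \<noteq> 0"
    and order: "l1 < l2"
    and double_roots: "c \<noteq> 0" "\<forall>l. det (l *\<^sub>R A - B) = c * (l - l1)^2 * (l - l2)^2"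
    and segre: "segre22 A B l1 l2"
  shows "(\<forall>l. l \<noteq> l1 \<and> l \<noteq> l2 \<longrightarrow> Id_pencil A B l = 2)
       \<and> (\<forall>e1 e2. block_signs22 A B l1 l2 e1 e2 \<longrightarrow>
             seq_equiv (index_seq22 A B l1 l2 e1 e2) (2, -1, 2, -1, 2)
           \<or> seq_equiv (index_seq22 A B l1 l2 e1 e2) (2, -1, 2, 1, 2))
       \<and> (\<exists>u v M p q. lin_indep2 u v \<and> invertible M \<and> lin_indep2 p q
           \<and> qsic A B = real_line u v \<union> space_cubic M
           \<and> real_line u v \<inter> space_cubic M = real_point p \<union> real_point q)"
proof -
  have sA: "transpose A = A" and sB: "transpose B = B" using symA symB by (simp_all add: sym_mat_def)
  obtain Q e1 e2 where iQ: "invertible Q" and e1: "e1 = -1 \<or> e1 = 1" and e2: "e2 = -1 \<or> e2 = 1"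
    and QA: "transpose Q ** A ** Q = canonA22 e1 e2" and QB: "transpose Q ** B ** Q = canonB22 e1 e2 l1 l2"
    using canonical_form[OF sA sB segre] by blast
  have l12: "l1 \<noteq> l2" using order by simp
  have P1: "\<forall>l. l \<noteq> l1 \<and> l \<noteq> l2 \<longrightarrow> Id_pencil A B l = 2"
    using Id_two[OF sA sB iQ e1 e2 QA QB] by blast
  have P2: "\<forall>f1 f2. block_signs22 A B l1 l2 f1 f2 \<longrightarrow>
             seq_equiv (index_seq22 A B l1 l2 f1 f2) (2, -1, 2, -1, 2)
           \<or> seq_equiv (index_seq22 A B l1 l2 f1 f2) (2, -1, 2, 1, 2)"
  proof (intro allI impI)
    fix f1 f2 assume bs: "block_signs22 A B l1 l2 f1 f2"
    hence f1: "f1 = -1 \<or> f1 = 1" and f2: "f2 = -1 \<or> f2 = 1" by (auto simp: block_signs22_def)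
    have i1: "Id_pencil A B (l1 - 1) = 2" using P1 order by simp
    have i2: "Id_pencil A B ((l1 + l2) / 2) = 2" using P1 order by simp
    have i3: "Id_pencil A B (l2 + 1) = 2" using P1 order by simp
    have ix: "index_seq22 A B l1 l2 f1 f2 = (2, f1, 2, f2, 2)"
      by (simp add: index_seq22_def i1 i2 i3)
    have st: "seq_step (2, f1, 2, f2, 2) (2, -f1, 2, -f2, 2)"
      by (simp add: seq_step_def)
    show "seq_equiv (index_seq22 A B l1 l2 f1 f2) (2, -1, 2, -1, 2)
        \<or> seq_equiv (index_seq22 A B l1 l2 f1 f2) (2, -1, 2, 1, 2)"
      unfolding ix seq_equiv_def using f1 f2 st by auto
  qed
  define u where "u = Q *v u0"
  define v where "v = Q *v v0"
  define M where "M = Q ** M0 e1 e2 l1 l2"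
  note IL = image_lemmas[OF iQ]
  note CQ = canon_qsic[OF e1 e2 l12]
  have Q1: "qsic A B = real_line u v \<union> space_cubic M"
    unfolding IL(1)[of A B] QA QB CQ(1) u_def v_def M_def IL(2) IL(3) by (rule image_Un)
  have Q2: "real_line u v \<inter> space_cubic M = real_point u \<union> real_point v"
    unfolding u_def v_def M_def IL(2) IL(3) IL(4) image_Int[OF IL(5), symmetric] CQ(2) by (rule image_Un)
  have I1: "lin_indep2 u v" unfolding u_def v_def by (rule lin_indep_Q[OF iQ])
  have I2: "invertible M" unfolding M_def by (rule invertible_mult[OF iQ M0_invertible[OF e1 e2 l12]])
  have P3: "\<exists>u v M p q. lin_indep2 u v \<and> invertible M \<and> lin_indep2 p q
           \<and> qsic A B = real_line u v \<union> space_cubic M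
           \<and> real_line u v \<inter> space_cubic M = real_point p \<union> real_point q"
    using I1 I2 Q1 Q2 by blast
  show ?thesis using P1 P2 P3 by blast
qed

end
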